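(* A topical function $f: \mathbb{R}^n \to \mathbb{R}^n$ is indecomposable if and only if the aggregated graph $\mathcal{G}^\infty(f)$ is strongly connected.
   Context: $f: \mathbb{R}^n \to \mathbb{R}^n$ is topical if $f(x+h) = f(x) + h$ for all $h \in \mathbb{R}$, $x \in \mathbb{R}^n$ (adding a scalar to every coordinate) and $x \le y$ componentwise implies $f(x) \le f(y)$. For $J \subseteq \{1,\dots,n\}$, $e_J$ is its characteristic vector. $f$ is decomposable if there is a partition $\{1,\dots,n\} = I \cup J$ into disjoint nonempty sets with $\lim_{u\to\infty} f_i(u e_J) < \infty$ for all $i \in I$; indecomposable otherwise. Aggregated graphs: $\mathcal{G}^1(f) = \mathcal{G}(f)$ is the directed graph on $\{1,\dots,n\}$ with an edge $i\to j$ iff $\lim_{u\to\infty} f_i(u e_{\{j\}}) = \infty$; each vertex $i$ is associated with the set $\sigma(i) = \{i\}$. For $k \ge 2$, the vertices of $\mathcal{G}^k(f)$ are the strongly connected components of $\mathcal{G}^{k-1}(f)$ (equivalence classes under: $X$ communicates with $Y$ iff $X = Y$ or there are directed paths both ways), a component $X$ being associated with $\sigma(X) = \bigcup_{Y \in X} \sigma(Y) \subseteq \{1,\dots,n\}$; there is an edge from $I$ to $J$ in $\mathcal{G}^k(f)$ iff there exists $i \in \sigma(I)$ with $\lim_{u\to\infty} f_i(u e_{\sigma(J)}) = \infty$. There is a least $N \le n$ such that $\mathcal{G}^k(f)$ is isomorphic to $\mathcal{G}^N(f)$ for all $k \ge N$, and $\mathcal{G}^\infty(f) := \mathcal{G}^N(f)$.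 *)

theory Defs
  imports "HOL-Analysis.Analysis"
begin

definition topical :: "(real^'n \<Rightarrow> real^'n) \<Rightarrow> bool" where
  "topical f \<longleftrightarrow>
     (\<forall>x h. f (x + (\<chi> i. h)) = f x + (\<chi> i. h)) \<and>
     (\<forall>x y. (\<forall>i. x $ i \<le> y $ i) \<longrightarrow> (\<forall>i. f x $ i \<le> f y $ i))"

definition charvec :: "'n set \<Rightarrow> real^'n" where
  "charvec J = (\<chi> i. if i \<in> J then 1 else 0)"

text \<open>lim_{u\<rightarrow>\<infinity>} f_i(u e_J) = \<infinity> (the limit exists in the extended reals
 by monotonicity; it is finite iff this fails).\<close>
definition lim_infinite :: "(real^'n \<Rightarrow> real^'n) \<Rightarrow> 'n \<Rightarrow> 'n set \<Rightarrow> bool" where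
  "lim_infinite f i J \<longleftrightarrow> filterlim (\<lambda>u. f (u *\<^sub>R charvec J) $ i) at_top at_top"

definition decomposable :: "(real^'n::finite \<Rightarrow> real^'n) \<Rightarrow> bool" where
  "decomposable f \<longleftrightarrow> (\<exists>I J. I \<union> J = UNIV \<and> I \<inter> J = {} \<and> I \<noteq> {} \<and> J \<noteq> {} \<and>
                               (\<forall>i\<in>I. \<not> lim_infinite f i J))"

definition indecomposable :: "(real^'n::finite \<Rightarrow> real^'n) \<Rightarrow> bool" where
  "indecomposable f \<longleftrightarrow> \<not> decomposable f"

type_synonym 'v digraph = "'v set \<times> ('v \<Rightarrow> 'v \<Rightarrow> bool)"

definition digraph_iso :: "'v digraph \<Rightarrow> 'w digraph \<Rightarrow> bool" where
  "digraph_iso G H \<longleftrightarrow> (\<exists>h. bij_betw h (fst G) (fst H) \<and>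
     (\<forall>x\<in>fst G. \<forall>y\<in>fst G. snd G x y \<longleftrightarrow> snd H (h x) (h y)))"

definition strongly_connected :: "'v digraph \<Rightarrow> bool" where
  "strongly_connected G \<longleftrightarrow>
     (\<forall>x\<in>fst G. \<forall>y\<in>fst G. (x, y) \<in> {(a, b). a \<in> fst G \<and> b \<in> fst G \<and> snd G a b}\<^sup>*)"

text \<open>Vertices of the aggregated graphs are represented by their associated
 sets \<sigma>(X) \<subseteq> {1..n}; \<sigma> is injective since these sets are disjoint and nonempty.\<close>
definition agg_edge :: "(real^'n \<Rightarrow> real^'n) \<Rightarrow> 'n set set \<Rightarrow> 'n set \<Rightarrow> 'n set \<Rightarrow> bool" where
  "agg_edge f P I J \<longleftrightarrow> I \<in> P \<and> J \<in> P \<and> (\<exists>i\<in>I. lim_infinite f i J)"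

definition communicates :: "(real^'n \<Rightarrow> real^'n) \<Rightarrow> 'n set set \<Rightarrow> 'n set \<Rightarrow> 'n set \<Rightarrow> bool" where
  "communicates f P X Y \<longleftrightarrow>
     (X, Y) \<in> {(a, b). agg_edge f P a b}\<^sup>* \<and> (Y, X) \<in> {(a, b). agg_edge f P a b}\<^sup>*"

text \<open>agg_parts f k is the vertex set of G^(k+1)(f).\<close>
primrec agg_parts :: "(real^'n \<Rightarrow> real^'n) \<Rightarrow> nat \<Rightarrow> 'n set set" where
  "agg_parts f 0 = {{i} | i. True}"
| "agg_parts f (Suc k) =
     (\<lambda>X. \<Union> {Y \<in> agg_parts f k. communicates f (agg_parts f k) X Y}) ` agg_parts f k"

text \<open>agg_graph f k = G^(k+1)(f).\<close>
definition agg_graph :: "(real^'n \<Rightarrow> real^'n) \<Rightarrow> nat \<Rightarrow> 'n set digraph" where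
  "agg_graph f k = (agg_parts f k, agg_edge f (agg_parts f k))"

definition agg_graph_inf :: "(real^'n \<Rightarrow> real^'n) \<Rightarrow> 'n set digraph" where
  "agg_graph_inf f = agg_graph f
     (LEAST N. \<forall>k\<ge>N. digraph_iso (agg_graph f k) (agg_graph f N))"

end

theory Submission
  imports Defs
begin

definition ispart :: "'a set set \<Rightarrow> bool" where
  "ispart P \<longleftrightarrow> (\<forall>X\<in>P. X \<noteq> {}) \<and> (\<forall>X\<in>P. \<forall>Y\<in>P. X \<noteq> Y \<longrightarrow> X \<inter> Y = {}) \<and> \<Union>P = UNIV \<and> finite P"

lemma edge_set_eq: "{(a, b). a \<in> P \<and> b \<in> P \<and> agg_edge f P a b} = {(a, b). agg_edge f P a b}"
  by (auto simp: agg_edge_def)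

lemma comm_refl: "communicates f P X X"
  by (simp add: communicates_def)

lemma comm_sym: "communicates f P X Y \<Longrightarrow> communicates f P Y X"
  by (simp add: communicates_def)

lemma comm_trans: "communicates f P X Y \<Longrightarrow> communicates f P Y Z \<Longrightarrow> communicates f P X Z"
  unfolding communicates_def by (meson rtrancl_trans)

lemma rt_in: "(X, Y) \<in> {(a, b). agg_edge f P a b}\<^sup>* \<Longrightarrow> X \<in> P \<Longrightarrow> Y \<in> P"
  by (erule rtranclE) (auto simp: agg_edge_def)

lemma comm_in: "communicates f P X Y \<Longrightarrow> X \<in> P \<Longrightarrow> Y \<in> P"
  unfolding communicates_def using rt_in by blast

lemma g_eq:
  assumes "ispart P" "X \<in> P" "X' \<in> P"
  shows "\<Union>{Y\<in>P. communicates f P X Y} = \<Union>{Y\<in>P. communicates f P X' Y} \<longleftrightarrow> communicates f P X X'"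
proof
  have disj: "\<forall>A\<in>P. \<forall>B\<in>P. A \<noteq> B \<longrightarrow> A \<inter> B = {}" and ne: "\<forall>A\<in>P. A \<noteq> {}"
    using assms(1) by (simp_all add: ispart_def)
  assume h: "\<Union>{Y\<in>P. communicates f P X Y} = \<Union>{Y\<in>P. communicates f P X' Y}"
  have "X' \<in> {Y\<in>P. communicates f P X' Y}" using assms(3) comm_refl by simp
  then have "X' \<subseteq> \<Union>{Y\<in>P. communicates f P X' Y}" by (rule Union_upper)
  then have sub: "X' \<subseteq> \<Union>{Y\<in>P. communicates f P X Y}" using h by simp
  obtain x where x: "x \<in> X'" using ne assms(3) by blast
  then have "x \<in> \<Union>{Y\<in>P. communicates f P X Y}" using sub by blast
  then obtain Y where Y: "Y \<in> P" "communicates f P X Y" "x \<in> Y" by auto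
  have "Y = X'"
  proof (rule ccontr)
    assume "Y \<noteq> X'"
    then have "Y \<inter> X' = {}" using disj Y(1) assms(3) by blast
    then show False using x Y(3) by blast
  qed
  then show "communicates f P X X'" using Y by simp
next
  assume c: "communicates f P X X'"
  have "communicates f P X Y \<longleftrightarrow> communicates f P X' Y" for Y
    using c comm_sym[of f P X X'] comm_trans[of f P X X' Y] comm_trans[of f P X' X Y] by blast
  then show "\<Union>{Y\<in>P. communicates f P X Y} = \<Union>{Y\<in>P. communicates f P X' Y}" by simp
qed

lemma part_step:
  assumes "ispart P"
  shows "ispart ((\<lambda>X. \<Union>{Y\<in>P. communicates f P X Y}) ` P)"
proof -
  let ?g = "\<lambda>X. \<Union>{Y\<in>P. communicates f P X Y}"
  have disj: "\<forall>A\<in>P. \<forall>B\<in>P. A \<noteq> B \<longrightarrow> A \<inter> B = {}" and neP: "\<forall>A\<in>P. A \<noteq> {}"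
    and covP: "\<Union>P = UNIV" and finP: "finite P"
    using assms by (simp_all add: ispart_def)
  have sub: "X \<subseteq> ?g X" if "X \<in> P" for X
  proof -
    have "X \<in> {Y\<in>P. communicates f P X Y}" using that comm_refl by simp
    then show ?thesis by (rule Union_upper)
  qed
  have ne: "\<forall>Z\<in>?g ` P. Z \<noteq> {}"
  proof
    fix Z assume "Z \<in> ?g ` P"
    then obtain X where "X \<in> P" "Z = ?g X" by blast
    then show "Z \<noteq> {}" using sub[of X] neP by blast
  qed
  have cov: "\<Union>(?g ` P) = UNIV"
  proof (rule set_eqI, rule iffI)
    fix x :: 'a assume "x \<in> UNIV"
    then obtain X where "X \<in> P" "x \<in> X" using covP by blast
    then show "x \<in> \<Union>(?g ` P)" using sub[of X] by blast
  qed simp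
  have dis: "\<forall>A\<in>?g ` P. \<forall>B\<in>?g ` P. A \<noteq> B \<longrightarrow> A \<inter> B = {}"
  proof (intro ballI impI)
    fix A B assume "A \<in> ?g ` P" "B \<in> ?g ` P" "A \<noteq> B"
    then obtain X X' where X: "X \<in> P" "X' \<in> P" "A = ?g X" "B = ?g X'" by blast
    show "A \<inter> B = {}"
    proof (rule ccontr)
      assume "A \<inter> B \<noteq> {}"
      then obtain x where "x \<in> A" "x \<in> B" by blast
      then obtain Y Y' where Y: "Y \<in> P" "communicates f P X Y" "Y' \<in> P" "communicates f P X' Y'" "x \<in> Y" "x \<in> Y'"
        using X by auto
      have "Y = Y'"
      proof (rule ccontr)
        assume "Y \<noteq> Y'"
        then have "Y \<inter> Y' = {}" using disj Y(1,3) by blast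
        then show False using Y(5,6) by blast
      qed
      then have "communicates f P X X'"
        using Y comm_sym[of f P X' Y'] comm_trans[of f P X Y X'] by simp
      then have "A = B" using g_eq[OF assms X(1,2)] X by simp
      then show False using \<open>A \<noteq> B\<close> by simp
    qed
  qed
  have "finite (?g ` P)" using finP by simp
  then show ?thesis using ne cov dis unfolding ispart_def by simp
qed

lemma step_strict:
  assumes "ispart P" "(\<lambda>X. \<Union>{Y\<in>P. communicates f P X Y}) ` P \<noteq> P"
  shows "card ((\<lambda>X. \<Union>{Y\<in>P. communicates f P X Y}) ` P) < card P"
proof -
  let ?g = "\<lambda>X. \<Union>{Y\<in>P. communicates f P X Y}"
  have fin: "finite P" using assms unfolding ispart_def by blast
  have "\<not> (\<forall>X\<in>P. ?g X = X)"
  proof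
    assume "\<forall>X\<in>P. ?g X = X"
    then have "?g ` P = P" by simp
    then show False using assms by simp
  qed
  then obtain X where X: "X \<in> P" "?g X \<noteq> X" by blast
  have "\<exists>Y. Y \<in> P \<and> communicates f P X Y \<and> Y \<noteq> X"
  proof (rule ccontr)
    assume "\<not> ?thesis"
    then have "{Y\<in>P. communicates f P X Y} = {X}" using X comm_refl by blast
    then show False using X by simp
  qed
  then obtain Y where Y: "Y \<in> P" "communicates f P X Y" "Y \<noteq> X" by blast
  have "?g X = ?g Y" using g_eq[OF assms(1) X(1) Y(1)] Y by simp
  then have "\<not> inj_on ?g P" using X Y unfolding inj_on_def by blast
  moreover have "card (?g ` P) \<le> card P" using fin card_image_le by blast
  moreover have "card (?g ` P) \<noteq> card P" using \<open>\<not> inj_on ?g P\<close> eq_card_imp_inj_on[OF fin] by blast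
  ultimately show ?thesis by linarith
qed

lemma stable_comm:
  assumes "ispart P" "(\<lambda>X. \<Union>{Y\<in>P. communicates f P X Y}) ` P = P"
    "X \<in> P" "Y \<in> P" "communicates f P X Y"
  shows "X = Y"
proof -
  let ?g = "\<lambda>X. \<Union>{Y\<in>P. communicates f P X Y}"
  have disj: "\<forall>A\<in>P. \<forall>B\<in>P. A \<noteq> B \<longrightarrow> A \<inter> B = {}" and neP: "\<forall>A\<in>P. A \<noteq> {}"
    using assms(1) by (simp_all add: ispart_def)
  have "?g X \<in> ?g ` P" by (rule imageI[OF assms(3)])
  then have gX: "?g X \<in> P" by (simp only: assms(2))
  have "X \<in> {Y\<in>P. communicates f P X Y}" using assms(3) comm_refl by simp
  then have sX: "X \<subseteq> ?g X" by (rule Union_upper)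
  have "Y \<in> {Y\<in>P. communicates f P X Y}" using assms(4,5) by simp
  then have sY: "Y \<subseteq> ?g X" by (rule Union_upper)
  have neX: "X \<noteq> {}" using neP assms(3) by blast
  have neY: "Y \<noteq> {}" using neP assms(4) by blast
  have "?g X = X"
  proof (rule ccontr)
    assume "?g X \<noteq> X"
    with bspec[OF bspec[OF disj gX] assms(3)] have "?g X \<inter> X = {}" by (rule mp)
    then show False using sX neX by (simp add: Int_absorb1)
  qed
  then have YX: "Y \<subseteq> X" using sY by simp
  show ?thesis
  proof (rule ccontr)
    assume "X \<noteq> Y"
    then have "X \<inter> Y = {}" using disj assms(3,4) by blast
    then show False using YX neY by blast
  qed
qed

lemma parts_ispart: "ispart (agg_parts f k)"
proof (induction k)
  case 0
  have eq: "agg_parts f 0 = range (\<lambda>i. {i})" by auto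
  have "finite (range (\<lambda>i::'a. {i}))" by simp
  moreover have "\<Union>(range (\<lambda>i::'a. {i})) = UNIV" by auto
  ultimately show ?case unfolding ispart_def eq by auto
next
  case (Suc k)
  show ?case unfolding agg_parts.simps by (rule part_step[OF Suc.IH])
qed

lemma exists_stable: "\<exists>M. agg_parts f (Suc M) = agg_parts f M"
proof (rule ccontr)
  assume "\<not> ?thesis"
  then have ns: "\<And>M. agg_parts f (Suc M) \<noteq> agg_parts f M" by blast
  have "card (agg_parts f k) + k \<le> card (agg_parts f 0)" for k
  proof (induction k)
    case 0 then show ?case by simp
  next
    case (Suc k)
    have "card (agg_parts f (Suc k)) < card (agg_parts f k)"
      using step_strict[OF parts_ispart[of f k]] ns[of k] by simp
    then show ?case using Suc by simp
  qed
  from this[of "Suc (card (agg_parts f 0))"] show False by simp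
qed

lemma lim_mono:
  assumes "topical f" "K \<subseteq> J" "lim_infinite f i K"
  shows "lim_infinite f i J"
proof -
  have "\<forall>\<^sub>F u in at_top. f (u *\<^sub>R charvec K) $ i \<le> f (u *\<^sub>R charvec J) $ i"
    using eventually_ge_at_top[of "0::real"]
  proof (rule eventually_mono)
    fix u :: real assume "0 \<le> u"
    then have "\<forall>j. (u *\<^sub>R charvec K) $ j \<le> (u *\<^sub>R charvec J) $ j"
      using assms(2) by (auto simp: charvec_def)
    then show "f (u *\<^sub>R charvec K) $ i \<le> f (u *\<^sub>R charvec J) $ i"
      using assms(1) unfolding topical_def by blast
  qed
  moreover have "filterlim (\<lambda>u. f (u *\<^sub>R charvec K) $ i) at_top at_top"
    using assms(3) unfolding lim_infinite_def by simp
  ultimately show ?thesis unfolding lim_infinite_def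
    by (rule filterlim_at_top_mono[rotated])
qed

lemma iso_sc:
  assumes "digraph_iso G H" "strongly_connected G"
  shows "strongly_connected H"
proof -
  obtain h where h: "bij_betw h (fst G) (fst H)"
    "\<forall>x\<in>fst G. \<forall>y\<in>fst G. snd G x y \<longleftrightarrow> snd H (h x) (h y)"
    using assms unfolding digraph_iso_def by blast
  let ?RG = "{(a, b). a \<in> fst G \<and> b \<in> fst G \<and> snd G a b}"
  let ?RH = "{(a, b). a \<in> fst H \<and> b \<in> fst H \<and> snd H a b}"
  have tr: "(h a, h b) \<in> ?RH\<^sup>*" if "(a, b) \<in> ?RG\<^sup>*" for a b
    using that
  proof (induction rule: rtrancl_induct)
    case base then show ?case by simp
  next
    case (step y z)
    have yz: "y \<in> fst G" "z \<in> fst G" "snd G y z" using step(2) by auto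
    then have "h y \<in> fst H" "h z \<in> fst H" using bij_betw_apply[OF h(1)] by auto
    moreover have "snd H (h y) (h z)" using h(2)[rule_format, OF yz(1,2)] yz(3) by simp
    ultimately have "(h y, h z) \<in> ?RH" by simp
    then show ?case by (rule rtrancl_into_rtrancl[OF step.IH])
  qed
  show ?thesis unfolding strongly_connected_def
  proof (intro ballI)
    fix x y assume xy: "x \<in> fst H" "y \<in> fst H"
    have im: "h ` fst G = fst H" using h(1) unfolding bij_betw_def by simp
    obtain a where a: "a \<in> fst G" "x = h a" using xy(1) im by blast
    obtain b where b: "b \<in> fst G" "y = h b" using xy(2) im by blast
    have "(a, b) \<in> ?RG\<^sup>*" using assms(2) a(1) b(1) unfolding strongly_connected_def by simp
    then show "(x, y) \<in> ?RH\<^sup>*" using tr a(2) b(2) by simp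
  qed
qed

theorem theorem6:
  fixes f :: "real^'n \<Rightarrow> real^'n"
  assumes "topical f"
  shows "indecomposable f \<longleftrightarrow> strongly_connected (agg_graph_inf f)"
proof -
  obtain M where M: "agg_parts f (Suc M) = agg_parts f M" using exists_stable by blast
  have allk: "agg_parts f k = agg_parts f M" if "k \<ge> M" for k
    using that
  proof (induction k rule: dec_induct)
    case base then show ?case by simp
  next
    case (step k)
    have "agg_parts f (Suc k) = agg_parts f (Suc M)" by (simp only: agg_parts.simps(2) step.IH)
    then show ?case using M by (rule trans)
  qed
  define N where "N = (LEAST N. \<forall>k\<ge>N. digraph_iso (agg_graph f k) (agg_graph f N))"
  have predM: "\<forall>k\<ge>M. digraph_iso (agg_graph f k) (agg_graph f M)"
  proof (intro allI impI)
    fix k assume "k \<ge> M"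
    have "agg_graph f k = agg_graph f M" unfolding agg_graph_def allk[OF \<open>k \<ge> M\<close>] by (rule refl)
    then show "digraph_iso (agg_graph f k) (agg_graph f M)"
      unfolding digraph_iso_def by (intro exI[of _ id]) auto
  qed
  have "N \<le> M" unfolding N_def using predM by (rule Least_le)
  have "\<forall>k\<ge>N. digraph_iso (agg_graph f k) (agg_graph f N)"
    unfolding N_def using predM by (rule LeastI)
  then have isoMN: "digraph_iso (agg_graph f M) (agg_graph f N)" using \<open>N \<le> M\<close> by blast
  have infN: "agg_graph_inf f = agg_graph f N" unfolding agg_graph_inf_def N_def by simp
  show ?thesis
  proof
    assume ind: "indecomposable f"
    let ?P = "agg_parts f M"
    have pP: "ispart ?P" by (rule parts_ispart)
    have stab: "(\<lambda>X. \<Union>{Y\<in>?P. communicates f ?P X Y}) ` ?P = ?P" using M by (simp only: agg_parts.simps(2))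
    have disj: "\<forall>A\<in>?P. \<forall>B\<in>?P. A \<noteq> B \<longrightarrow> A \<inter> B = {}" and neP: "\<forall>A\<in>?P. A \<noteq> {}"
      and covP: "\<Union>?P = UNIV" and finP: "finite ?P"
      using pP by (simp_all add: ispart_def)
    have "strongly_connected (agg_graph f M)"
    proof (rule ccontr)
      assume nsc: "\<not> strongly_connected (agg_graph f M)"
      have "\<not> (\<forall>x\<in>?P. \<forall>y\<in>?P. (x, y) \<in> {(a, b). agg_edge f ?P a b}\<^sup>*)"
        using nsc unfolding strongly_connected_def agg_graph_def fst_conv snd_conv edge_set_eq .
      then obtain X Y where XY: "X \<in> ?P" "Y \<in> ?P" "(X, Y) \<notin> {(a, b). agg_edge f ?P a b}\<^sup>*"
        by blast
      have "X \<noteq> Y"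
      proof
        assume "X = Y"
        then show False using XY(3) by simp
      qed
      define r where "r = {(A, B). A \<noteq> B \<and> agg_edge f ?P A B}"
      have rsub: "r \<subseteq> ?P \<times> ?P" unfolding r_def agg_edge_def by auto
      have "finite r" using rsub finP by (meson finite_SigmaI finite_subset)
      moreover have "acyclic r"
        unfolding acyclic_def
      proof (intro allI notI)
        fix A assume "(A, A) \<in> r\<^sup>+"
        then obtain B where B: "(A, B) \<in> r" "(B, A) \<in> r\<^sup>*" by (meson tranclD)
        have rs: "r \<subseteq> {(a, b). agg_edge f ?P a b}" unfolding r_def by auto
        have c1: "(B, A) \<in> {(a, b). agg_edge f ?P a b}\<^sup>*" using rtrancl_mono[OF rs] B(2) by (rule subsetD)
        have "(A, B) \<in> {(a, b). agg_edge f ?P a b}" using B(1) rs by (rule rev_subsetD)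
        then have c2: "(A, B) \<in> {(a, b). agg_edge f ?P a b}\<^sup>*" by (rule r_into_rtrancl)
        have cAB: "communicates f ?P A B" unfolding communicates_def using c1 c2 by (rule conjI[rotated])
        have AB: "A \<in> ?P" "B \<in> ?P" using B(1) rsub by auto
        have "A \<noteq> B" using B(1) unfolding r_def by simp
        then show False using stable_comm[OF pP stab AB cAB] by simp
      qed
      ultimately have "wf r" by (rule finite_acyclic_wf)
      obtain W where W0: "W \<in> ?P" "\<forall>Z. (Z, W) \<in> r \<longrightarrow> Z \<notin> ?P"
        using wfE_min[OF \<open>wf r\<close> XY(1)] by blast
      have W: "W \<in> ?P" "\<And>Z. (Z, W) \<in> r \<Longrightarrow> Z \<notin> ?P" using W0 by auto
      have d1: "- W \<union> W = UNIV" by auto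
      have d2: "- W \<inter> W = {}" by auto
      have d4: "W \<noteq> {}" using W(1) neP by blast
      obtain Z0 where Z0: "Z0 \<in> ?P" "Z0 \<noteq> W" using XY(1,2) \<open>X \<noteq> Y\<close> by blast
      have "Z0 \<noteq> {}" using Z0(1) neP by blast
      moreover have "Z0 \<inter> W = {}" using bspec[OF bspec[OF disj Z0(1)] W(1)] Z0(2) by (rule mp)
      ultimately have d3: "- W \<noteq> {}" by blast
      have d5: "\<forall>i\<in>- W. \<not> lim_infinite f i W"
      proof
        fix i assume "i \<in> - W"
        have "i \<in> \<Union>?P" using covP by simp
        then obtain Z where Z: "Z \<in> ?P" "i \<in> Z" by (rule UnionE)
        have "Z \<noteq> W" using Z(2) \<open>i \<in> - W\<close> by blast
        show "\<not> lim_infinite f i W"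
        proof
          assume "lim_infinite f i W"
          then have "(Z, W) \<in> r" using Z \<open>Z \<noteq> W\<close> W(1) unfolding r_def agg_edge_def by auto
          then show False using W(2) Z(1) by blast
        qed
      qed
      have "decomposable f"
        unfolding decomposable_def
        by (rule exI[of _ "- W"], rule exI[of _ W]) (intro conjI d1 d2 d3 d4 d5)
      then show False using ind unfolding indecomposable_def by simp
    qed
    then show "strongly_connected (agg_graph_inf f)" using iso_sc[OF isoMN] infN by simp
  next
    assume sc: "strongly_connected (agg_graph_inf f)"
    show "indecomposable f"
      unfolding indecomposable_def
    proof
      assume "decomposable f"
      then obtain I J where IJ: "I \<union> J = UNIV" "I \<inter> J = {}" "I \<noteq> {}" "J \<noteq> {}"
        "\<forall>i\<in>I. \<not> lim_infinite f i J" unfolding decomposable_def by blast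
      have reach: "Z \<subseteq> I" if inv: "\<forall>Z\<in>P. Z \<subseteq> I \<or> Z \<subseteq> J"
        and r: "(X, Z) \<in> {(a, b). agg_edge f P a b}\<^sup>*" and XI: "X \<subseteq> I" for P X Z
        using r
      proof (induction rule: rtrancl_induct)
        case base then show ?case using XI by simp
      next
        case (step Z W)
        then obtain i where i: "i \<in> Z" "lim_infinite f i W" "W \<in> P" unfolding agg_edge_def by blast
        have "i \<in> I" using i step by blast
        show ?case
        proof (rule ccontr)
          assume "\<not> W \<subseteq> I"
          then have "W \<subseteq> J" using inv i by blast
          then have "lim_infinite f i J" using lim_mono[OF assms] i by blast
          then show False using IJ \<open>i \<in> I\<close> by blast
        qed
      qed
      have inv: "\<forall>Z\<in>agg_parts f k. Z \<subseteq> I \<or> Z \<subseteq> J" for k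
      proof (induction k)
        case 0 then show ?case using IJ by auto
      next
        case (Suc k)
        let ?P = "agg_parts f k"
        have pP: "ispart ?P" by (rule parts_ispart)
        show ?case
        proof
          fix Z assume "Z \<in> agg_parts f (Suc k)"
          then obtain X where X: "X \<in> ?P" "Z = \<Union>{Y\<in>?P. communicates f ?P X Y}" by auto
          show "Z \<subseteq> I \<or> Z \<subseteq> J"
          proof (cases "X \<subseteq> I")
            case True
            then have "\<forall>Y. communicates f ?P X Y \<longrightarrow> Y \<subseteq> I"
              using reach[OF Suc] unfolding communicates_def by blast
            then show ?thesis using X by blast
          next
            case False
            then have XJ: "X \<subseteq> J" using Suc X by blast
            have "\<forall>Y\<in>?P. communicates f ?P X Y \<longrightarrow> Y \<subseteq> J"
            proof (intro ballI impI)
              fix Y assume Y: "Y \<in> ?P" "communicates f ?P X Y"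
              show "Y \<subseteq> J"
              proof (rule ccontr)
                assume "\<not> Y \<subseteq> J"
                then have "Y \<subseteq> I" using Suc Y by blast
                then have "X \<subseteq> I" using reach[OF Suc] Y unfolding communicates_def by blast
                then show False using False by simp
              qed
            qed
            then show ?thesis using X by blast
          qed
        qed
      qed
      let ?P = "agg_parts f N"
      have pP: "ispart ?P" by (rule parts_ispart)
      obtain i0 j0 where "i0 \<in> I" "j0 \<in> J" using IJ by blast
      have covN: "\<Union>?P = UNIV" using pP by (simp add: ispart_def)
      have "i0 \<in> \<Union>?P" "j0 \<in> \<Union>?P" using covN by simp_all
      then obtain X Y where XY: "X \<in> ?P" "Y \<in> ?P" "i0 \<in> X" "j0 \<in> Y" by blast
      have "X \<subseteq> I" using inv[of N] XY \<open>i0 \<in> I\<close> IJ by blast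
      have "\<forall>x\<in>?P. \<forall>y\<in>?P. (x, y) \<in> {(a, b). agg_edge f ?P a b}\<^sup>*"
        using sc unfolding infN strongly_connected_def agg_graph_def fst_conv snd_conv edge_set_eq .
      then have "(X, Y) \<in> {(a, b). agg_edge f ?P a b}\<^sup>*" using XY(1,2) by blast
      then have "Y \<subseteq> I" using reach[OF inv[of N]] \<open>X \<subseteq> I\<close> by blast
      then show False using XY \<open>j0 \<in> J\<close> IJ by blast
    qed
  qed
qed

end
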